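(* For every positive integer $n$, the Aztec diamond $\operatorname{AD}(n)$ (with no defects) has a cover by L-trominoes if and only if $n(n+1)\equiv 0 \pmod 3$.
   Context: A cell is a unit square $[i,i+1]\times[j,j+1]$ with $i,j\in\mathbb{Z}$, labelled $(i,j)$. An L-tromino is a set of three cells equal to a $2\times 2$ block of cells with one cell removed. A cover of a region $R$ (a finite edge-connected set of cells) is a set of pairwise disjoint L-trominoes contained in $R$ whose union is $R$. The Aztec diamond of order $n$, $\operatorname{AD}(n)$, is the union of the cells $[a,a+1]\times[b,b+1]$, $a,b\in\mathbb{Z}$, lying completely inside $\{(x,y): |x|+|y|\le n+1\}$; it has $2n(n+1)$ cells. *)

theory Defs
  imports Main
begin

text \<open>A cell (i,j) is the unit square [i,i+1] x [j,j+1].\<close>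
type_synonym cell = "int \<times> int"

definition block2 :: "cell \<Rightarrow> cell set" where
  "block2 c = {(fst c + di, snd c + dj) | di dj. di \<in> {0,1} \<and> dj \<in> {0,1}}"

definition L_tromino :: "cell set \<Rightarrow> bool" where
  "L_tromino T \<longleftrightarrow> (\<exists>c r. r \<in> block2 c \<and> T = block2 c - {r})"

definition is_cover :: "cell set set \<Rightarrow> cell set \<Rightarrow> bool" where
  "is_cover C R \<longleftrightarrow> (\<forall>T\<in>C. L_tromino T \<and> T \<subseteq> R)
     \<and> (\<forall>T\<in>C. \<forall>T'\<in>C. T \<noteq> T' \<longrightarrow> T \<inter> T' = {})
     \<and> \<Union>C = R"

text \<open>Cell (a,b) lies completely inside {|x|+|y| <= n+1}; since the region is convex,
  this holds iff all four corners of the square lie in it.\<close>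
definition aztec_diamond :: "nat \<Rightarrow> cell set" where
  "aztec_diamond n = {(a,b). \<forall>x\<in>{a, a+1}. \<forall>y\<in>{b, b+1}. \<bar>x\<bar> + \<bar>y\<bar> \<le> int n + 1}"

end

theory Submission
  imports Defs
begin


lemma AD_mem: "(p \<in> aztec_diamond n) \<longleftrightarrow> \<bar>2*fst p+1\<bar> + \<bar>2*snd p+1\<bar> \<le> 2*int n"
  by (cases p) (auto simp: aztec_diamond_def abs_if)

lemma block2_mem: "p \<in> block2 c \<longleftrightarrow> (fst p = fst c \<or> fst p = fst c + 1) \<and> (snd p = snd c \<or> snd p = snd c + 1)"
  by (cases p; cases c) (auto simp: block2_def)

definition tileable :: "cell set \<Rightarrow> bool" where
  "tileable R \<longleftrightarrow> (\<exists>C. is_cover C R)"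

lemma tileable_empty: "tileable {}"
  unfolding tileable_def is_cover_def by (rule exI[of _ "{}"]) auto

lemma tileable_tromino: "L_tromino T \<Longrightarrow> tileable T"
  unfolding tileable_def is_cover_def by (rule exI[of _ "{T}"]) auto

lemma tileable_Un:
  assumes "tileable A" "tileable B" "A \<inter> B = {}"
  shows "tileable (A \<union> B)"
proof -
  from assms obtain CA CB where a: "is_cover CA A" and b: "is_cover CB B"
    unfolding tileable_def by blast
  have a1: "\<forall>T\<in>CA. L_tromino T \<and> T \<subseteq> A" and a2: "\<forall>T\<in>CA. \<forall>T'\<in>CA. T \<noteq> T' \<longrightarrow> T \<inter> T' = {}"
    and a3: "\<Union>CA = A" using a unfolding is_cover_def by auto
  have b1: "\<forall>T\<in>CB. L_tromino T \<and> T \<subseteq> B" and b2: "\<forall>T\<in>CB. \<forall>T'\<in>CB. T \<noteq> T' \<longrightarrow> T \<inter> T' = {}"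
    and b3: "\<Union>CB = B" using b unfolding is_cover_def by auto
  have 1: "\<forall>T\<in>CA \<union> CB. L_tromino T \<and> T \<subseteq> A \<union> B" using a1 b1 by blast
  have 2: "\<forall>T\<in>CA \<union> CB. \<forall>T'\<in>CA \<union> CB. T \<noteq> T' \<longrightarrow> T \<inter> T' = {}"
  proof (intro ballI impI)
    fix T T' assume t: "T \<in> CA \<union> CB" "T' \<in> CA \<union> CB" "T \<noteq> T'"
    show "T \<inter> T' = {}"
    proof (cases "T \<in> CA")
      case True
      show ?thesis
      proof (cases "T' \<in> CA")
        case True2: True
        then show ?thesis using True a2 t(3) by blast
      next
        case False
        then have "T' \<subseteq> B" using t(2) b1 by blast
        moreover have "T \<subseteq> A" using True a1 by blast
        ultimately show ?thesis using assms(3) by blast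
      qed
    next
      case False
      then have tB: "T \<in> CB" using t(1) by blast
      show ?thesis
      proof (cases "T' \<in> CB")
        case True
        then show ?thesis using tB b2 t(3) by blast
      next
        case False
        then have "T' \<subseteq> A" using t(2) a1 by blast
        moreover have "T \<subseteq> B" using tB b1 by blast
        ultimately show ?thesis using assms(3) by blast
      qed
    qed
  qed
  have 3: "\<Union>(CA \<union> CB) = A \<union> B" using a3 b3 by auto
  have "is_cover (CA \<union> CB) (A \<union> B)" using 1 2 3 unfolding is_cover_def by blast
  then show ?thesis unfolding tileable_def by blast
qed

lemma tileable_vimage:
  assumes "tileable R" "bij g" "\<And>T. L_tromino T \<Longrightarrow> L_tromino (g -` T)"
  shows "tileable (g -` R)"
proof -
  from assms obtain C where c: "is_cover C R" unfolding tileable_def by blast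
  have sj: "surj g" using assms(2) by (simp add: bij_def)
  have inj: "g -` T = g -` T' \<Longrightarrow> T = T'" for T T'
    using surj_image_vimage_eq[OF sj, of T] surj_image_vimage_eq[OF sj, of T'] by simp
  have c1: "\<forall>T\<in>C. L_tromino T \<and> T \<subseteq> R" and c2: "\<forall>T\<in>C. \<forall>T'\<in>C. T \<noteq> T' \<longrightarrow> T \<inter> T' = {}"
    and c3: "\<Union>C = R" using c unfolding is_cover_def by auto
  have "\<forall>T\<in>(\<lambda>T. g -` T) ` C. L_tromino T \<and> T \<subseteq> g -` R"
    using c1 assms(3) by blast
  moreover have "\<forall>T\<in>(\<lambda>T. g -` T) ` C. \<forall>T'\<in>(\<lambda>T. g -` T) ` C. T \<noteq> T' \<longrightarrow> T \<inter> T' = {}"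
  proof (intro ballI impI)
    fix U U' assume "U \<in> (\<lambda>T. g -` T) ` C" "U' \<in> (\<lambda>T. g -` T) ` C" "U \<noteq> U'"
    then obtain T T' where "T \<in> C" "T' \<in> C" "U = g -` T" "U' = g -` T'" "T \<noteq> T'" by blast
    then show "U \<inter> U' = {}" using c2 by (metis vimage_Int vimage_empty)
  qed
  moreover have "\<Union>((\<lambda>T. g -` T) ` C) = g -` R" using c3 by blast
  ultimately have "is_cover ((\<lambda>T. g -` T) ` C) (g -` R)" unfolding is_cover_def by blast
  then show ?thesis unfolding tileable_def by blast
qed

lemma trans_L:
  assumes "L_tromino T"
  shows "L_tromino ((\<lambda>p. (fst p + c, snd p + d)) -` T)"
proof -
  from assms obtain x r where r: "r \<in> block2 x" and T: "T = block2 x - {r}"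
    unfolding L_tromino_def by blast
  have "(\<lambda>p. (fst p + c, snd p + d)) -` T = block2 (fst x - c, snd x - d) - {(fst r - c, snd r - d)}"
    unfolding T by (auto simp: block2_mem)
  moreover have "(fst r - c, snd r - d) \<in> block2 (fst x - c, snd x - d)"
    using r by (auto simp: block2_mem)
  ultimately show ?thesis unfolding L_tromino_def by blast
qed

lemma refl1_L:
  assumes "L_tromino T"
  shows "L_tromino ((\<lambda>p. (- 1 - fst p, snd p)) -` T)"
proof -
  from assms obtain x r where r: "r \<in> block2 x" and T: "T = block2 x - {r}"
    unfolding L_tromino_def by blast
  have "(\<lambda>p. (- 1 - fst p, snd p)) -` T = block2 (- 2 - fst x, snd x) - {(- 1 - fst r, snd r)}"
    unfolding T by (auto simp: block2_mem)
  moreover have "(- 1 - fst r, snd r) \<in> block2 (- 2 - fst x, snd x)"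
    using r by (auto simp: block2_mem)
  ultimately show ?thesis unfolding L_tromino_def by blast
qed

lemma refl2_L:
  assumes "L_tromino T"
  shows "L_tromino ((\<lambda>p. (fst p, - 1 - snd p)) -` T)"
proof -
  from assms obtain x r where r: "r \<in> block2 x" and T: "T = block2 x - {r}"
    unfolding L_tromino_def by blast
  have "(\<lambda>p. (fst p, - 1 - snd p)) -` T = block2 (fst x, - 2 - snd x) - {(fst r, - 1 - snd r)}"
    unfolding T by (auto simp: block2_mem)
  moreover have "(fst r, - 1 - snd r) \<in> block2 (fst x, - 2 - snd x)"
    using r by (auto simp: block2_mem)
  ultimately show ?thesis unfolding L_tromino_def by blast
qed

lemma tileable_trans: "tileable R \<Longrightarrow> tileable ((\<lambda>p. (fst p + c, snd p + d)) -` R)"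
  apply (erule tileable_vimage[OF _ _ trans_L])
  apply (rule o_bij[where g="\<lambda>p. (fst p - c, snd p - d)"]) by (auto simp: fun_eq_iff)

lemma tileable_refl1: "tileable R \<Longrightarrow> tileable ((\<lambda>p. (- 1 - fst p, snd p)) -` R)"
  apply (erule tileable_vimage[OF _ _ refl1_L])
  apply (rule o_bij[where g="\<lambda>p. (- 1 - fst p, snd p)"]) by (auto simp: fun_eq_iff)

lemma tileable_refl2: "tileable R \<Longrightarrow> tileable ((\<lambda>p. (fst p, - 1 - snd p)) -` R)"
  apply (erule tileable_vimage[OF _ _ refl2_L])
  apply (rule o_bij[where g="\<lambda>p. (fst p, - 1 - snd p)"]) by (auto simp: fun_eq_iff)



definition Q :: "int \<Rightarrow> cell set" where
  "Q m = {p. 0 \<le> fst p \<and> 0 \<le> snd p \<and> m \<le> fst p + snd p \<and> fst p + snd p \<le> m + 2}"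

lemma tileable_L: "r \<in> block2 c \<Longrightarrow> tileable (block2 c - {r})"
  by (rule tileable_tromino) (unfold L_tromino_def, blast)

lemma Q_tile: "tileable (Q (2 * int k - 1))"
proof (induction k)
  case 0
  have "Q (2 * int 0 - 1) = block2 (0,0) - {(1,1)}"
    by (auto simp: Q_def block2_mem)
  then show ?case by (simp add: tileable_L block2_mem)
next
  case (Suc k)
  define m where "m = 2 * int k - 1"
  have e: "Q (2 * int (Suc k) - 1) =
     ((\<lambda>p. (fst p + 0, snd p + (-2))) -` Q m \<union> (block2 (m+3,0) - {(m+4,1)})) \<union> (block2 (m+1,0) - {(m+1,0)})"
    unfolding m_def by (auto simp: Q_def block2_mem)
  show ?case unfolding e
    apply (rule tileable_Un)+
    using Suc.IH unfolding m_def
       apply (rule tileable_trans)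
      apply (rule tileable_L, simp add: block2_mem)
     apply (auto simp: Q_def block2_mem)[1]
    apply (rule tileable_L, simp add: block2_mem)
    apply (auto simp: Q_def block2_mem)[1]
    done
qed

lemma rect_h: "tileable {p. c \<le> fst p \<and> fst p \<le> c + 2 \<and> d \<le> snd p \<and> snd p \<le> d + 1}"
proof -
  have "{p. c \<le> fst p \<and> fst p \<le> c + 2 \<and> d \<le> snd p \<and> snd p \<le> d + 1} =
     (block2 (c,d) - {(c+1,d)}) \<union> (block2 (c+1,d) - {(c+1,d+1)})"
    by (auto simp: block2_mem)
  moreover have "tileable ((block2 (c,d) - {(c+1,d)}) \<union> (block2 (c+1,d) - {(c+1,d+1)}))"
    by (rule tileable_Un; (rule tileable_L)?) (auto simp: block2_mem)
  ultimately show ?thesis by simp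
qed



lemma rect_v: "tileable {p. c \<le> fst p \<and> fst p \<le> c + 1 \<and> d \<le> snd p \<and> snd p \<le> d + 2}"
proof -
  have "{p. c \<le> fst p \<and> fst p \<le> c + 1 \<and> d \<le> snd p \<and> snd p \<le> d + 2} =
     (block2 (c,d) - {(c+1,d+1)}) \<union> (block2 (c,d+1) - {(c,d+1)})"
    by (auto simp: block2_mem)
  moreover have "tileable ((block2 (c,d) - {(c+1,d+1)}) \<union> (block2 (c,d+1) - {(c,d+1)}))"
    by (rule tileable_Un; (rule tileable_L)?) (auto simp: block2_mem)
  ultimately show ?thesis by simp
qed

lemma ring_even_eq:
  fixes n :: nat defines "N \<equiv> int n"
  shows "aztec_diamond (n+3) = aztec_diamond n
   \<union> {p. 0 \<le> fst p \<and> 1 \<le> snd p \<and> N \<le> fst p + snd p \<and> fst p + snd p \<le> N + 2}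
   \<union> {p. fst p \<le> -1 \<and> 1 \<le> snd p \<and> N \<le> -1 - fst p + snd p \<and> -1 - fst p + snd p \<le> N + 2}
   \<union> {p. 0 \<le> fst p \<and> snd p \<le> -2 \<and> N \<le> fst p - 1 - snd p \<and> fst p - 1 - snd p \<le> N + 2}
   \<union> {p. fst p \<le> -1 \<and> snd p \<le> -2 \<and> N \<le> -2 - fst p - snd p \<and> -2 - fst p - snd p \<le> N + 2}
   \<union> {p. N \<le> fst p \<and> fst p \<le> N + 2 \<and> -1 \<le> snd p \<and> snd p \<le> -1 + 1}
   \<union> {p. -N-3 \<le> fst p \<and> fst p \<le> -N-3 + 2 \<and> -1 \<le> snd p \<and> snd p \<le> -1 + 1}"
proof (rule set_eqI)
  fix p :: cell
  obtain a b where p: "p = (a,b)" by (cases p)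
  have "\<bar>2*a+1\<bar> = (if 0 \<le> a then 2*a+1 else -2*a-1)" "\<bar>2*b+1\<bar> = (if 0 \<le> b then 2*b+1 else -2*b-1)" by auto
  note h = this
  show "p \<in> aztec_diamond (n+3) \<longleftrightarrow> p \<in> aztec_diamond n
   \<union> {p. 0 \<le> fst p \<and> 1 \<le> snd p \<and> N \<le> fst p + snd p \<and> fst p + snd p \<le> N + 2}
   \<union> {p. fst p \<le> -1 \<and> 1 \<le> snd p \<and> N \<le> -1 - fst p + snd p \<and> -1 - fst p + snd p \<le> N + 2}
   \<union> {p. 0 \<le> fst p \<and> snd p \<le> -2 \<and> N \<le> fst p - 1 - snd p \<and> fst p - 1 - snd p \<le> N + 2}
   \<union> {p. fst p \<le> -1 \<and> snd p \<le> -2 \<and> N \<le> -2 - fst p - snd p \<and> -2 - fst p - snd p \<le> N + 2}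
   \<union> {p. N \<le> fst p \<and> fst p \<le> N + 2 \<and> -1 \<le> snd p \<and> snd p \<le> -1 + 1}
   \<union> {p. -N-3 \<le> fst p \<and> fst p \<le> -N-3 + 2 \<and> -1 \<le> snd p \<and> snd p \<le> -1 + 1}"
    unfolding p N_def by (cases "0 \<le> a"; cases "0 \<le> b"; simp add: AD_mem h; arith)
qed

lemma abs2: "\<bar>2*(a::int)+1\<bar> = (if 0 \<le> a then 2*a+1 else -2*a-1)" by auto

lemma ring_even:
  assumes ev: "even n" and t: "tileable (aztec_diamond n)"
  shows "tileable (aztec_diamond (n+3))"
proof -
  define N where "N = int n"
  obtain k where k: "n = 2*k" using ev by blast
  have tQ: "tileable (Q (N - 1))" using Q_tile[of k] by (simp add: N_def k)
  define X where "X = {p. 0 \<le> fst p \<and> 1 \<le> snd p \<and> N \<le> fst p + snd p \<and> fst p + snd p \<le> N + 2}"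
  have "X = (\<lambda>p. (fst p + 0, snd p + -1)) -` Q (N-1)" by (auto simp: X_def Q_def)
  then have tX: "tileable X" using tileable_trans[OF tQ, of 0 "-1"] by simp
  have t1: "tileable {p. fst p \<le> -1 \<and> 1 \<le> snd p \<and> N \<le> -1 - fst p + snd p \<and> -1 - fst p + snd p \<le> N + 2}"
  proof -
    have "{p. fst p \<le> -1 \<and> 1 \<le> snd p \<and> N \<le> -1 - fst p + snd p \<and> -1 - fst p + snd p \<le> N + 2} = (\<lambda>p. (- 1 - fst p, snd p)) -` X"
      by (auto simp: X_def)
    then show ?thesis using tileable_refl1[OF tX] by simp
  qed
  have t2: "tileable {p. 0 \<le> fst p \<and> snd p \<le> -2 \<and> N \<le> fst p - 1 - snd p \<and> fst p - 1 - snd p \<le> N + 2}"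
  proof -
    have "{p. 0 \<le> fst p \<and> snd p \<le> -2 \<and> N \<le> fst p - 1 - snd p \<and> fst p - 1 - snd p \<le> N + 2} = (\<lambda>p. (fst p, - 1 - snd p)) -` X"
      by (auto simp: X_def)
    then show ?thesis using tileable_refl2[OF tX] by simp
  qed
  have t3: "tileable {p. fst p \<le> -1 \<and> snd p \<le> -2 \<and> N \<le> -2 - fst p - snd p \<and> -2 - fst p - snd p \<le> N + 2}"
  proof -
    have "{p. fst p \<le> -1 \<and> snd p \<le> -2 \<and> N \<le> -2 - fst p - snd p \<and> -2 - fst p - snd p \<le> N + 2} = (\<lambda>p. (fst p, - 1 - snd p)) -` ((\<lambda>p. (- 1 - fst p, snd p)) -` X)"
      by (auto simp: X_def)
    then show ?thesis using tileable_refl2[OF tileable_refl1[OF tX]] by simp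
  qed
  show ?thesis unfolding ring_even_eq N_def[symmetric]
    apply (rule tileable_Un[OF tileable_Un[OF tileable_Un[OF tileable_Un[OF tileable_Un[OF tileable_Un[OF t tX[unfolded X_def]] t1] t2] t3] rect_h] rect_h])
    by (auto simp: AD_mem abs2 N_def split: if_splits)
qed

lemma ring_odd_eq:
  fixes n :: nat defines "N \<equiv> int n"
  shows "aztec_diamond (n+3) = aztec_diamond n
   \<union> {p. 1 \<le> fst p \<and> 1 \<le> snd p \<and> N \<le> fst p + snd p \<and> fst p + snd p \<le> N + 2}
   \<union> {p. fst p \<le> -2 \<and> 1 \<le> snd p \<and> N \<le> -1 - fst p + snd p \<and> -1 - fst p + snd p \<le> N + 2}
   \<union> {p. 1 \<le> fst p \<and> snd p \<le> -2 \<and> N \<le> fst p - 1 - snd p \<and> fst p - 1 - snd p \<le> N + 2}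
   \<union> {p. fst p \<le> -2 \<and> snd p \<le> -2 \<and> N \<le> -2 - fst p - snd p \<and> -2 - fst p - snd p \<le> N + 2}
   \<union> {p. N \<le> fst p \<and> fst p \<le> N + 2 \<and> -1 \<le> snd p \<and> snd p \<le> -1 + 1}
   \<union> {p. -N-3 \<le> fst p \<and> fst p \<le> -N-3 + 2 \<and> -1 \<le> snd p \<and> snd p \<le> -1 + 1}
   \<union> {p. -1 \<le> fst p \<and> fst p \<le> -1 + 1 \<and> N \<le> snd p \<and> snd p \<le> N + 2}
   \<union> {p. -1 \<le> fst p \<and> fst p \<le> -1 + 1 \<and> -N-3 \<le> snd p \<and> snd p \<le> -N-3 + 2}" (is "_ = ?R")
proof (rule set_eqI)
  fix p :: cell
  obtain a b where p: "p = (a,b)" by (cases p)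
  have h: "\<bar>2*a+1\<bar> = (if 0 \<le> a then 2*a+1 else -2*a-1)" "\<bar>2*b+1\<bar> = (if 0 \<le> b then 2*b+1 else -2*b-1)" by auto
  show "p \<in> aztec_diamond (n+3) \<longleftrightarrow> p \<in> ?R"
    unfolding p N_def by (cases "0 \<le> a"; cases "0 \<le> b"; simp add: AD_mem h; arith)
qed

lemma ring_odd:
  assumes od: "odd n" and t: "tileable (aztec_diamond n)"
  shows "tileable (aztec_diamond (n+3))"
proof -
  define N where "N = int n"
  obtain k where k: "n = 2*k+1" using od oddE by blast
  have n1: "1 \<le> int n" using k by simp
  have tQ: "tileable (Q (N - 2))" using Q_tile[of k] by (simp add: N_def k)
  define X where "X = {p. 1 \<le> fst p \<and> 1 \<le> snd p \<and> N \<le> fst p + snd p \<and> fst p + snd p \<le> N + 2}"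
  have "X = (\<lambda>p. (fst p + -1, snd p + -1)) -` Q (N-2)" by (auto simp: X_def Q_def)
  then have tX: "tileable X" using tileable_trans[OF tQ, of "-1" "-1"] by simp
  have t1: "tileable {p. fst p \<le> -2 \<and> 1 \<le> snd p \<and> N \<le> -1 - fst p + snd p \<and> -1 - fst p + snd p \<le> N + 2}"
  proof -
    have "{p. fst p \<le> -2 \<and> 1 \<le> snd p \<and> N \<le> -1 - fst p + snd p \<and> -1 - fst p + snd p \<le> N + 2} = (\<lambda>p. (- 1 - fst p, snd p)) -` X"
      by (auto simp: X_def)
    then show ?thesis using tileable_refl1[OF tX] by simp
  qed
  have t2: "tileable {p. 1 \<le> fst p \<and> snd p \<le> -2 \<and> N \<le> fst p - 1 - snd p \<and> fst p - 1 - snd p \<le> N + 2}"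
  proof -
    have "{p. 1 \<le> fst p \<and> snd p \<le> -2 \<and> N \<le> fst p - 1 - snd p \<and> fst p - 1 - snd p \<le> N + 2} = (\<lambda>p. (fst p, - 1 - snd p)) -` X"
      by (auto simp: X_def)
    then show ?thesis using tileable_refl2[OF tX] by simp
  qed
  have t3: "tileable {p. fst p \<le> -2 \<and> snd p \<le> -2 \<and> N \<le> -2 - fst p - snd p \<and> -2 - fst p - snd p \<le> N + 2}"
  proof -
    have "{p. fst p \<le> -2 \<and> snd p \<le> -2 \<and> N \<le> -2 - fst p - snd p \<and> -2 - fst p - snd p \<le> N + 2} = (\<lambda>p. (fst p, - 1 - snd p)) -` ((\<lambda>p. (- 1 - fst p, snd p)) -` X)"
      by (auto simp: X_def)
    then show ?thesis using tileable_refl2[OF tileable_refl1[OF tX]] by simp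
  qed
  show ?thesis unfolding ring_odd_eq N_def[symmetric]
    apply (rule tileable_Un[OF tileable_Un[OF tileable_Un[OF tileable_Un[OF tileable_Un[OF tileable_Un[OF tileable_Un[OF tileable_Un[OF t tX[unfolded X_def]] t1] t2] t3] rect_h] rect_h] rect_v] rect_v])
    using n1 by (auto simp: AD_mem abs2 N_def split: if_splits)
qed

lemma ring: "tileable (aztec_diamond n) \<Longrightarrow> tileable (aztec_diamond (n+3))"
  using ring_odd ring_even by blast

lemma AD0: "aztec_diamond 0 = {}"
  by (auto simp: AD_mem abs2 split: if_splits)

lemma AD2: "tileable (aztec_diamond 2)"
proof -
  have e: "aztec_diamond 2 = (((block2 (-1,0) - {(0,0)}) \<union> (block2 (0,-1) - {(0,-1)}))
     \<union> (block2 (-2,-1) - {(-1,0)})) \<union> (block2 (-1,-2) - {(-1,-1)})" (is "_ = ?R")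
  proof (rule set_eqI)
    fix p :: cell
    obtain a b where p: "p = (a,b)" by (cases p)
    have h: "\<bar>2*a+1\<bar> = (if 0 \<le> a then 2*a+1 else -2*a-1)" "\<bar>2*b+1\<bar> = (if 0 \<le> b then 2*b+1 else -2*b-1)" by auto
    have m: "(a,b) \<in> aztec_diamond 2 \<longleftrightarrow> \<bar>2*a+1\<bar> + \<bar>2*b+1\<bar> \<le> 4" by (simp add: AD_mem)
    show "p \<in> aztec_diamond 2 \<longleftrightarrow> p \<in> ?R"
    proof
      assume "p \<in> aztec_diamond 2"
      then have A: "\<bar>2*a+1\<bar> + \<bar>2*b+1\<bar> \<le> 4" using m p by simp
      then have "a \<in> {-2,-1,0,1}" "b \<in> {-2,-1,0,1}" unfolding h by (auto split: if_splits)
      then show "p \<in> ?R" using A unfolding p by (auto simp: block2_mem)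
    next
      assume "p \<in> ?R"
      then show "p \<in> aztec_diamond 2" unfolding p m by (auto simp: block2_mem)
    qed
  qed
  have t1: "tileable (block2 (-1,0) - {(0,0)})" by (rule tileable_L) (simp add: block2_mem)
  have t2: "tileable (block2 (0,-1) - {(0,-1)})" by (rule tileable_L) (simp add: block2_mem)
  have t3: "tileable (block2 (-2,-1) - {(-1,0)})" by (rule tileable_L) (simp add: block2_mem)
  have t4: "tileable (block2 (-1,-2) - {(-1,-1)})" by (rule tileable_L) (simp add: block2_mem)
  show ?thesis unfolding e
    by (rule tileable_Un[OF tileable_Un[OF tileable_Un[OF t1 t2] t3] t4]; auto simp: block2_mem)+
qed

lemma tile_mod: "tileable (aztec_diamond (3*k)) \<and> tileable (aztec_diamond (3*k+2))"
proof (induction k)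
  case 0
  then show ?case using AD2 AD0 tileable_empty by (metis mult_0_right add_0)
next
  case (Suc k)
  then show ?case using ring[of "3*k"] ring[of "3*k+2"] by (simp add: add.commute add.left_commute)
qed



lemma card_block2: "card (block2 c) = 4"
proof -
  obtain x y where c: "c = (x,y)" by (cases c)
  have "block2 c = {(x,y),(x+1,y),(x,y+1),(x+1,y+1)}" unfolding c by (auto simp: block2_mem)
  then show ?thesis by simp
qed

lemma finite_block2: "finite (block2 c)"
  using card_block2[of c] card.infinite by fastforce

lemma card_L: "L_tromino T \<Longrightarrow> card T = 3"
  unfolding L_tromino_def using card_block2 finite_block2 by (auto simp: card_Diff_singleton)

lemma finite_L: "L_tromino T \<Longrightarrow> finite T"
  unfolding L_tromino_def using finite_block2 by auto

lemma cover_card: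
  assumes "is_cover C R"
  shows "card R = 3 * card C"
proof -
  have c1: "\<forall>T\<in>C. L_tromino T \<and> T \<subseteq> R" and c2: "\<forall>T\<in>C. \<forall>T'\<in>C. T \<noteq> T' \<longrightarrow> T \<inter> T' = {}"
    and c3: "\<Union>C = R" using assms unfolding is_cover_def by auto
  have "pairwise disjnt C" using c2 unfolding pairwise_def disjnt_def by blast
  then have "card (\<Union>C) = sum card C" using c1 finite_L by (intro card_Union_disjoint) auto
  also have "\<dots> = sum (\<lambda>_. 3) C" using c1 card_L by (intro sum.cong) auto
  finally show ?thesis using c3 by simp
qed

definition TT :: "nat \<Rightarrow> cell set" where
  "TT n = {p. 0 \<le> fst p \<and> 0 \<le> snd p \<and> fst p + snd p < int n}"

lemma sum_tri: "2 * (\<Sum>i<n. n - i) = n * (n + 1::nat)"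
proof (induction n)
  case 0 then show ?case by simp
next
  case (Suc n)
  have "(\<Sum>i<Suc n. Suc n - i) = (\<Sum>i<n. Suc n - i) + 1" by simp
  also have "(\<Sum>i<n. Suc n - i) = (\<Sum>i<n. (n - i) + 1)" by (intro sum.cong) auto
  also have "\<dots> = (\<Sum>i<n. n - i) + n" by (simp only: sum.distrib) simp
  finally show ?case using Suc.IH by (simp add: algebra_simps)
qed

lemma card_TT: "2 * card (TT n) = n * (n + 1)"
proof -
  have e: "TT n = (\<lambda>q. (int (fst q), int (snd q))) ` (SIGMA i:{..<n}. {..<n - i})"
  proof (rule set_eqI)
    fix p :: cell
    obtain a b where p: "p = (a,b)" by (cases p)
    show "p \<in> TT n \<longleftrightarrow> p \<in> (\<lambda>q. (int (fst q), int (snd q))) ` (SIGMA i:{..<n}. {..<n - i})"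
    proof
      assume "p \<in> TT n"
      then have "0 \<le> a" "0 \<le> b" "a + b < int n" unfolding TT_def p by auto
      then have "(nat a, nat b) \<in> (SIGMA i:{..<n}. {..<n - i})" "p = (int (nat a), int (nat b))"
        unfolding p by auto
      then show "p \<in> (\<lambda>q. (int (fst q), int (snd q))) ` (SIGMA i:{..<n}. {..<n - i})"
        by (metis (no_types, lifting) fst_conv image_eqI snd_conv)
    next
      assume "p \<in> (\<lambda>q. (int (fst q), int (snd q))) ` (SIGMA i:{..<n}. {..<n - i})"
      then show "p \<in> TT n" unfolding TT_def by auto
    qed
  qed
  have "inj (\<lambda>q::nat\<times>nat. (int (fst q), int (snd q)))" by (auto simp: inj_def prod_eq_iff)
  then have "card (TT n) = card (SIGMA i:{..<n}. {..<n - i})"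
    unfolding e by (simp add: card_image inj_on_subset)
  also have "\<dots> = (\<Sum>i<n. n - i)" by simp
  finally show ?thesis using sum_tri by simp
qed

lemma finite_TT: "finite (TT n)"
proof -
  have "TT n \<subseteq> {0..int n} \<times> {0..int n}" unfolding TT_def by auto
  then show ?thesis by (rule finite_subset) auto
qed

lemma card_vimage_bij: "bij g \<Longrightarrow> card (g -` S) = card S"
  by (metis bij_betw_def bij_betw_subset card_image subset_UNIV surj_image_vimage_eq)

lemma finite_vimage_bij: "bij g \<Longrightarrow> finite S \<Longrightarrow> finite (g -` S)"
  by (simp add: bij_def finite_vimageI)

lemma bij_r1: "bij (\<lambda>p::cell. (- 1 - fst p, snd p))"
  by (rule o_bij[where g="\<lambda>p. (- 1 - fst p, snd p)"]) (auto simp: fun_eq_iff)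
lemma bij_r2: "bij (\<lambda>p::cell. (fst p, - 1 - snd p))"
  by (rule o_bij[where g="\<lambda>p. (fst p, - 1 - snd p)"]) (auto simp: fun_eq_iff)

lemma AD_split: "aztec_diamond n = ((TT n \<union> (\<lambda>p. (- 1 - fst p, snd p)) -` TT n) \<union>
   (\<lambda>p. (fst p, - 1 - snd p)) -` TT n) \<union> (\<lambda>p. (fst p, - 1 - snd p)) -` ((\<lambda>p. (- 1 - fst p, snd p)) -` TT n)"
  (is "_ = ?R")
proof (rule set_eqI)
  fix p :: cell
  obtain a b where p: "p = (a,b)" by (cases p)
  have h: "\<bar>2*a+1\<bar> = (if 0 \<le> a then 2*a+1 else -2*a-1)" "\<bar>2*b+1\<bar> = (if 0 \<le> b then 2*b+1 else -2*b-1)" by auto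
  show "p \<in> aztec_diamond n \<longleftrightarrow> p \<in> ?R"
    unfolding p by (cases "0 \<le> a"; cases "0 \<le> b"; simp add: AD_mem h TT_def; arith)
qed

lemma card_AD: "card (aztec_diamond n) = 2 * (n * (n + 1))"
proof -
  let ?r1 = "\<lambda>p::cell. (- 1 - fst p, snd p)" and ?r2 = "\<lambda>p::cell. (fst p, - 1 - snd p)"
  have f0: "finite (TT n)" by (rule finite_TT)
  have f1: "finite (?r1 -` TT n)" by (rule finite_vimage_bij[OF bij_r1 f0])
  have f2: "finite (?r2 -` TT n)" by (rule finite_vimage_bij[OF bij_r2 f0])
  have f3: "finite (?r2 -` (?r1 -` TT n))" by (rule finite_vimage_bij[OF bij_r2 f1])
  have c1: "card (?r1 -` TT n) = card (TT n)" by (rule card_vimage_bij[OF bij_r1])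
  have c2: "card (?r2 -` TT n) = card (TT n)" by (rule card_vimage_bij[OF bij_r2])
  have c3: "card (?r2 -` (?r1 -` TT n)) = card (TT n)" using card_vimage_bij[OF bij_r2] c1 by simp
  have d1: "TT n \<inter> ?r1 -` TT n = {}" by (auto simp: TT_def)
  have d2: "(TT n \<union> ?r1 -` TT n) \<inter> ?r2 -` TT n = {}" by (auto simp: TT_def)
  have d3: "(TT n \<union> ?r1 -` TT n \<union> ?r2 -` TT n) \<inter> ?r2 -` (?r1 -` TT n) = {}" by (auto simp: TT_def)
  have "card (aztec_diamond n) = 4 * card (TT n)"
    unfolding AD_split
    by (simp add: card_Un_disjoint f0 f1 f2 f3 d1 d2 d3 c1 c2 c3)
  then show ?thesis using card_TT[of n] by simp
qed


lemma dvd3: "(3::nat) dvd 2 * m \<Longrightarrow> 3 dvd m" by presburger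

theorem corollary1:
  fixes n :: nat
  assumes "n \<ge> 1"
  shows "(\<exists>C. is_cover C (aztec_diamond n)) \<longleftrightarrow> n * (n + 1) mod 3 = 0"
proof
  assume "\<exists>C. is_cover C (aztec_diamond n)"
  then obtain C where "is_cover C (aztec_diamond n)" by blast
  then have "2 * (n * (n + 1)) = 3 * card C" using cover_card card_AD by metis
  then have "3 dvd 2 * (n * (n + 1))" by simp
  then have "3 dvd n * (n + 1)"
    using dvd3[of "n * (n + 1)"] by blast
  then show "n * (n + 1) mod 3 = 0" by simp
next
  assume h: "n * (n + 1) mod 3 = 0"
  have "n mod 3 \<noteq> 1"
  proof
    assume "n mod 3 = 1"
    then have "n * (n + 1) mod 3 = 2" by (simp add: mod_mult_eq[symmetric] mod_add_eq[symmetric])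
    then show False using h by simp
  qed
  then have "n = 3 * (n div 3) \<or> n = 3 * (n div 3) + 2" by presburger
  then have "tileable (aztec_diamond n)" using tile_mod[of "n div 3"] by metis
  then show "\<exists>C. is_cover C (aztec_diamond n)" unfolding tileable_def .
qed

end
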